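(* (i) The set of symplectic formal power series is a subalgebra of $\mathbb{C}[[x]]$. (ii) A meromorphic function $\psi(t)$ is symplectic of order $d$ at $a\in\mathbb{C}$ if and only if there exists a formal power series $\rho(y)\in\mathbb{C}[[y]]$ such that the Laurent expansion of $\psi(t)$ at $t=a$ equals $\frac{1}{(a-t)^d}\,\rho\!\left(\frac{(a-t)^2}{1-a+t}\right)$. (iii) If $\psi_1(t)$ is symplectic at $a\in\mathbb{C}$ of order $d_1$ and $\psi_2(t)$ is symplectic at $a$ of order $d_2$, then $\psi_1(t)\psi_2(t)$ is symplectic at $a$ of order $d_1+d_2$.
   Context: A formal power series $\varphi(x)=\sum_{i\ge0}\gamma_i x^i\in\mathbb{C}[[x]]$ is called symplectic if for every $m\ge1$ one has $\sum_{k=0}^{m-1}(-1)^k\binom{m-1}{k}\gamma_{m+k}=0$. A meromorphic function $\psi(t)$ whose pole at $t=a$ has order at most $d\in\mathbb{Z}$ is called symplectic at $a$ of order $d$ if the formal power series $x^d\psi(a-x)\in\mathbb{C}[[x]]$ is symplectic. In (ii) the expression is understood as a formal Laurent series in the variable $x=a-t$, with $\frac{(a-t)^2}{1-a+t}=\frac{x^2}{1-x}$. *)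

theory Defs
  imports "HOL-Complex_Analysis.Complex_Analysis"
begin

definition symplectic_fps :: "complex fps \<Rightarrow> bool" where
  "symplectic_fps \<phi> \<longleftrightarrow>
     (\<forall>m::nat. m \<ge> 1 \<longrightarrow>
        (\<Sum>k<m. (-1)^k * of_nat ((m - 1) choose k) * fps_nth \<phi> (m + k)) = 0)"

text \<open>psi is symplectic at a of order d: psi(a - x) has a Laurent expansion F at x = 0
  (i.e. psi is meromorphic at a), its pole at a has order at most d (x^d F is a power series),
  and the power series x^d psi(a - x) is symplectic.\<close>
definition symplectic_at :: "(complex \<Rightarrow> complex) \<Rightarrow> complex \<Rightarrow> int \<Rightarrow> bool" where
  "symplectic_at \<psi> a d \<longleftrightarrow>
     (\<exists>F. (\<lambda>x. \<psi> (a - x)) has_laurent_expansion F \<and>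
          fls_subdegree (fls_X_intpow d * F) \<ge> 0 \<and>
          symplectic_fps (fls_regpart (fls_X_intpow d * F)))"

end

theory Submission
  imports Defs
begin

definition YY :: "complex fps" where "YY = fps_X^2 / (1 - fps_X)"

lemma YY_alt: "YY = fps_X^2 * inverse (1 - fps_X)"
  unfolding YY_def by (simp add: fps_divide_unit)

lemma YY0: "YY $ 0 = 0" by (simp add: YY_alt)

lemma YY_mult: "YY * (1 - fps_X) = fps_X^2"
  unfolding YY_alt by (simp add: mult.assoc inverse_mult_eq_1)

lemma YY_pow: "YY ^ i = fps_X ^ (2*i) * inverse (1 - fps_X) ^ i"
  unfolding YY_alt by (simp add: power_mult_distrib power_mult)

lemma YY_pow_nth_less: "n < 2*i \<Longrightarrow> (YY^i) $ n = 0"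
  by (simp add: YY_pow fps_X_power_mult_nth)

lemma YY_pow_nth_diag: "(YY^i) $ (2*i) = 1"
  by (simp add: YY_pow fps_X_power_mult_nth fps_nth_power_0)

lemma Xm1_nth: "((fps_X - 1 :: complex fps)^n) $ j = (if j \<le> n then (-1)^(n-j) * of_nat (n choose j) else 0)"
proof (induction n arbitrary: j)
  case 0 then show ?case by auto
next
  case (Suc n)
  have e: "(fps_X - 1 :: complex fps)^Suc n = fps_X * (fps_X - 1)^n - (fps_X - 1)^n"
    by (simp add: algebra_simps)
  show ?case
  proof (cases j)
    case 0 then show ?thesis by (simp add: e Suc.IH)
  next
    case (Suc j')
    show ?thesis
    proof (cases "j' < n")
      case True
      then obtain t where t: "n - j' = Suc t" by (metis Suc_diff_Suc zero_less_diff)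
      have "n - Suc j' = t" using t by simp
      then show ?thesis using Suc True t by (simp add: e Suc.IH algebra_simps)
    next
      case False
      then show ?thesis unfolding e using Suc by (cases "j' = n") (auto simp: Suc.IH)
    qed
  qed
qed

lemma Lform:
  fixes \<phi> :: "complex fps"
  assumes m: "m \<ge> 1"
  shows "(\<Sum>k<m. (-1)^k * of_nat ((m - 1) choose k) * fps_nth \<phi> (m + k))
       = (\<phi> * (fps_X - 1)^(m-1)) $ (2*m-1)"
proof -
  let ?Q = "(fps_X - 1 :: complex fps)^(m-1)"
  have "(\<phi> * ?Q) $ (2*m-1) = (\<Sum>i=0..2*m-1. \<phi>$i * ?Q$(2*m-1-i))"
    by (rule fps_mult_nth)
  also have "{0..2*m-1} = {0..<m} \<union> {m..2*m-1}" using m by auto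
  also have "(\<Sum>i\<in>{0..<m} \<union> {m..2*m-1}. \<phi>$i * ?Q$(2*m-1-i))
      = (\<Sum>i\<in>{0..<m}. \<phi>$i * ?Q$(2*m-1-i)) + (\<Sum>i\<in>{m..2*m-1}. \<phi>$i * ?Q$(2*m-1-i))"
    by (rule sum.union_disjoint) auto
  also have "(\<Sum>i\<in>{0..<m}. \<phi>$i * ?Q$(2*m-1-i)) = 0"
    by (rule sum.neutral) (auto simp: Xm1_nth)
  also have "{m..2*m-1} = (\<lambda>k. m + k) ` {..<m}"
  proof -
    have "x \<in> (\<lambda>k. m + k) ` {..<m}" if "x \<in> {m..2*m-1}" for x
      using that m by (intro image_eqI[of _ _ "x - m"]) auto
    then show ?thesis using m by auto
  qed
  also have "(\<Sum>i\<in>(\<lambda>k. m + k) ` {..<m}. \<phi>$i * ?Q$(2*m-1-i))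
      = (\<Sum>k<m. \<phi>$(m+k) * ?Q$(2*m-1-(m+k)))"
    by (subst sum.reindex) (auto simp: inj_on_def)
  also have "\<dots> = (\<Sum>k<m. (-1)^k * of_nat ((m - 1) choose k) * fps_nth \<phi> (m + k))"
  proof (rule sum.cong[OF refl])
    fix k assume k: "k \<in> {..<m}"
    have e1: "2*m-1-(m+k) = (m-1) - k" using k m by auto
    have e2: "m - 1 - (m - 1 - k) = k" using k by auto
    have e3: "(m-1) choose (m-1-k) = (m-1) choose k"
      using k by (intro binomial_symmetric[symmetric]) auto
    show "\<phi>$(m+k) * ?Q$(2*m-1-(m+k)) = (-1)^k * of_nat ((m - 1) choose k) * fps_nth \<phi> (m + k)"
      unfolding e1 Xm1_nth e2 e3 by auto
  qed
  finally show ?thesis by simp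
qed

lemma sympl_iff: "symplectic_fps \<phi> \<longleftrightarrow> (\<forall>m\<ge>1. (\<phi> * (fps_X - 1)^(m-1)) $ (2*m-1) = 0)"
  unfolding symplectic_fps_def using Lform by simp

lemma sympl_add: "symplectic_fps f \<Longrightarrow> symplectic_fps g \<Longrightarrow> symplectic_fps (f + g)"
  by (simp add: sympl_iff distrib_right)

lemma sympl_diff: "symplectic_fps f \<Longrightarrow> symplectic_fps g \<Longrightarrow> symplectic_fps (f - g)"
  by (simp add: sympl_iff left_diff_distrib)

lemma sympl_cmult: "symplectic_fps f \<Longrightarrow> symplectic_fps (fps_const c * f)"
  by (simp add: sympl_iff mult.assoc)

lemma sympl_zero: "symplectic_fps 0" by (simp add: sympl_iff)

lemma sympl_sum: "finite S \<Longrightarrow> (\<And>i. i \<in> S \<Longrightarrow> symplectic_fps (f i)) \<Longrightarrow> symplectic_fps (sum f S)"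
  by (induction S rule: finite_induct) (auto intro: sympl_add sympl_zero)

lemma onemX_pow_nth: "n > k \<Longrightarrow> ((1 - fps_X :: complex fps)^k) $ n = 0"
proof (induction k arbitrary: n)
  case 0 then show ?case by simp
next
  case (Suc k)
  have e: "(1 - fps_X :: complex fps)^Suc k = (1 - fps_X)^k - fps_X * (1 - fps_X)^k"
    by (simp add: algebra_simps)
  show ?case unfolding e using Suc by auto
qed

lemma YY_pow_sympl_aux:
  assumes "i < m"
  shows "(YY^i * (fps_X - 1)^(m-1)) $ (2*m-1) = 0"
proof -
  have "(fps_X - 1 :: complex fps)^(m-1) = (-1)^(m-1) * (1 - fps_X)^(m-1)"
    by (metis minus_diff_eq power_minus)
  also have "(1 - fps_X :: complex fps)^(m-1) = (1 - fps_X)^i * (1 - fps_X)^(m-1-i)"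
    using assms by (simp flip: power_add)
  finally have "YY^i * (fps_X - 1)^(m-1) = YY^i * ((-1)^(m-1) * ((1 - fps_X)^i * (1 - fps_X)^(m-1-i)))"
    by (simp only:)
  also have "\<dots> = (-1)^(m-1) * ((YY * (1 - fps_X))^i * (1 - fps_X)^(m-1-i))"
    by (simp only: power_mult_distrib ac_simps)
  also have "\<dots> = (-1)^(m-1) * (fps_X^(2*i) * (1 - fps_X)^(m-1-i))"
    by (simp add: YY_mult power_mult)
  finally have "(YY^i * (fps_X - 1)^(m-1)) $ (2*m-1) = (-1)^(m-1) * (fps_X^(2*i) * (1 - fps_X)^(m-1-i)) $ (2*m-1)"
    by (metis fps_mult_left_const_nth fps_const_neg fps_const_1_eq_1 fps_const_power)
  also have "\<dots> = 0"
    using assms by (simp add: fps_X_power_mult_nth onemX_pow_nth)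
  finally show ?thesis .
qed

lemma fps_decomp: "(f::complex fps) = (\<Sum>i<m. fps_const (f$i) * fps_X^i) + fps_X^m * fps_shift m f"
proof (rule fps_ext)
  fix n
  have "(\<Sum>i<m. fps_const (f$i) * fps_X^i) $ n = (\<Sum>i<m. if n = i then f$i else 0)"
  proof -
    have "(\<Sum>i<m. fps_const (f$i) * fps_X^i) $ n = (\<Sum>k<m. f$k * (if n = k then 1 else 0))"
      by (simp add: fps_sum_nth fps_X_power_nth)
    also have "\<dots> = (\<Sum>i<m. if n = i then f$i else 0)" by (rule sum.cong) auto
    finally show ?thesis .
  qed
  also have "\<dots> = (if n < m then f$n else 0)"
    by (simp add: sum.delta)
  finally show "f $ n = ((\<Sum>i<m. fps_const (f$i) * fps_X^i) + fps_X^m * fps_shift m f) $ n"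
    by (simp add: fps_X_power_mult_nth)
qed

lemma compose_sympl: "symplectic_fps (\<rho> oo YY)"
  unfolding sympl_iff
proof (intro allI impI)
  fix m :: nat assume m: "m \<ge> 1"
  have "\<rho> oo YY = (\<Sum>i<m. fps_const (\<rho>$i) * YY^i) + YY^m * (fps_shift m \<rho> oo YY)"
    apply (subst fps_decomp[of \<rho> m])
    apply (simp add: fps_compose_add_distrib fps_compose_sum_distrib fps_compose_mult_distrib[OF YY0]
       fps_X_power_compose[OF YY0])
    done
  also have "YY^m = fps_X^(2*m) * inverse (1 - fps_X) ^ m" by (rule YY_pow)
  finally have "\<rho> oo YY = (\<Sum>i<m. fps_const (\<rho>$i) * YY^i) + fps_X^(2*m) * (inverse (1 - fps_X) ^ m * (fps_shift m \<rho> oo YY))"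
    by (simp only: mult.assoc)
  then have "(\<rho> oo YY) * (fps_X - 1)^(m-1) = (\<Sum>i<m. fps_const (\<rho>$i) * YY^i) * (fps_X - 1)^(m-1)
       + (fps_X^(2*m) * (inverse (1 - fps_X) ^ m * (fps_shift m \<rho> oo YY))) * (fps_X - 1)^(m-1)"
    by (simp only: distrib_right)
  then have e: "(\<rho> oo YY) * (fps_X - 1)^(m-1) = (\<Sum>i<m. fps_const (\<rho>$i) * (YY^i * (fps_X - 1)^(m-1)))
       + fps_X^(2*m) * (inverse (1 - fps_X) ^ m * (fps_shift m \<rho> oo YY) * (fps_X - 1)^(m-1))"
    by (simp only: sum_distrib_right mult.assoc)
  show "((\<rho> oo YY) * (fps_X - 1)^(m-1)) $ (2*m-1) = 0"
    unfolding e using m by (simp add: fps_sum_nth fps_X_power_mult_nth YY_pow_sympl_aux[simplified])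
qed

function rr :: "complex fps \<Rightarrow> nat \<Rightarrow> complex" where
  "rr \<phi> j = \<phi> $ (2*j) - (\<Sum>i<j. rr \<phi> i * (YY^i) $ (2*j))"
  by auto
termination by (relation "Wellfounded.measure snd") auto

declare rr.simps[simp del]

lemma rr_even: "(Abs_fps (rr \<phi>) oo YY) $ (2*j) = \<phi> $ (2*j)"
proof -
  let ?r = "Abs_fps (rr \<phi>)"
  have "(?r oo YY) $ (2*j) = (\<Sum>i=0..2*j. rr \<phi> i * (YY^i) $ (2*j))"
    by (simp add: fps_compose_nth)
  also have "{0..2*j} = {..<j} \<union> {j} \<union> {j<..2*j}" by auto
  also have "(\<Sum>i\<in>{..<j} \<union> {j} \<union> {j<..2*j}. rr \<phi> i * (YY^i) $ (2*j))
     = (\<Sum>i<j. rr \<phi> i * (YY^i) $ (2*j)) + rr \<phi> j * (YY^j) $ (2*j)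
       + (\<Sum>i\<in>{j<..2*j}. rr \<phi> i * (YY^i) $ (2*j))"
    by (subst sum.union_disjoint, auto)+
  also have "(\<Sum>i\<in>{j<..2*j}. rr \<phi> i * (YY^i) $ (2*j)) = 0"
    by (rule sum.neutral) (auto simp: YY_pow_nth_less)
  finally show ?thesis
    by (simp add: YY_pow_nth_diag rr.simps[of \<phi> j])
qed

lemma sympl_even_zero:
  fixes \<psi> :: "complex fps"
  assumes s: "symplectic_fps \<psi>" and ev: "\<And>j. \<psi> $ (2*j) = 0"
  shows "\<psi> = 0"
proof -
  have "\<psi> $ n = 0" for n
  proof (induction n rule: less_induct)
    case (less n)
    show ?case
    proof (cases "even n")
      case True then show ?thesis using ev by (metis evenE)
    next
      case False
      define m where "m = (n + 1) div 2"
      have m1: "m \<ge> 1" and nm: "n = 2*m - 1" using False unfolding m_def by presburger+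
      have "(\<Sum>k<m. (-1)^k * of_nat ((m - 1) choose k) * \<psi> $ (m + k)) = 0"
        using s m1 unfolding symplectic_fps_def by blast
      moreover have "{..<m} = insert (m-1) {..<m-1}" using m1 by auto
      ultimately have "(-1)^(m-1) * of_nat ((m - 1) choose (m-1)) * \<psi> $ (m + (m-1))
          + (\<Sum>k<m-1. (-1)^k * of_nat ((m - 1) choose k) * \<psi> $ (m + k)) = 0"
        by simp
      moreover have "(\<Sum>k<m-1. (-1)^k * of_nat ((m - 1) choose k) * \<psi> $ (m + k)) = 0"
        by (rule sum.neutral) (use less nm in auto)
      moreover have "m + (m-1) = n" using nm m1 by simp
      ultimately show ?thesis by simp
    qed
  qed
  then show ?thesis by (simp add: fps_ext)
qed

lemma sympl_char: "symplectic_fps \<phi> \<longleftrightarrow> (\<exists>\<rho>. \<phi> = \<rho> oo YY)"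
proof
  assume s: "symplectic_fps \<phi>"
  let ?r = "Abs_fps (rr \<phi>)"
  have "\<phi> - (?r oo YY) = 0"
    by (rule sympl_even_zero) (auto intro: sympl_diff s compose_sympl simp: rr_even)
  then show "\<exists>\<rho>. \<phi> = \<rho> oo YY" by auto
qed (auto intro: compose_sympl)

lemma sympl_mult: "symplectic_fps f \<Longrightarrow> symplectic_fps g \<Longrightarrow> symplectic_fps (f * g)"
proof -
  assume "symplectic_fps f" "symplectic_fps g"
  then obtain r1 r2 where "f = r1 oo YY" "g = r2 oo YY" using sympl_char by blast
  then have "f * g = (r1 * r2) oo YY" by (simp add: fps_compose_mult_distrib[OF YY0])
  then show ?thesis using compose_sympl by simp
qed

lemma sympl_one: "symplectic_fps 1"
  using compose_sympl[of 1] by simp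

lemma part2:
  "symplectic_at \<psi> a d \<longleftrightarrow>
     (\<exists>\<rho>::complex fps. (\<lambda>x. \<psi> (a - x)) has_laurent_expansion
        (fls_X_intpow (- d) * fps_to_fls (\<rho> oo (fps_X ^ 2 / (1 - fps_X)))))"
proof
  assume "symplectic_at \<psi> a d"
  then obtain F where F: "(\<lambda>x. \<psi> (a - x)) has_laurent_expansion F"
     "fls_subdegree (fls_X_intpow d * F) \<ge> 0" "symplectic_fps (fls_regpart (fls_X_intpow d * F))"
    unfolding symplectic_at_def by blast
  then obtain \<rho> where r: "fls_regpart (fls_X_intpow d * F) = \<rho> oo YY" using sympl_char by blast
  have "fls_X_intpow d * F = fps_to_fls (\<rho> oo YY)"
    using F(2) r fls_regpart_to_fls_trivial by metis
  then have "fls_X_intpow (-d) * (fls_X_intpow d * F) = fls_X_intpow (-d) * fps_to_fls (\<rho> oo YY)"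
    by simp
  moreover have "fls_X_intpow (-d) * (fls_X_intpow d * F) = F"
    by (simp only: mult.assoc[symmetric] fls_X_intpow_times_fls_X_intpow) simp
  ultimately have "F = fls_X_intpow (-d) * fps_to_fls (\<rho> oo YY)"
    by metis
  then show "\<exists>\<rho>::complex fps. (\<lambda>x. \<psi> (a - x)) has_laurent_expansion
        (fls_X_intpow (- d) * fps_to_fls (\<rho> oo (fps_X ^ 2 / (1 - fps_X))))"
    using F(1) unfolding YY_def by blast
next
  assume "\<exists>\<rho>::complex fps. (\<lambda>x. \<psi> (a - x)) has_laurent_expansion
        (fls_X_intpow (- d) * fps_to_fls (\<rho> oo (fps_X ^ 2 / (1 - fps_X))))"
  then obtain \<rho> where r: "(\<lambda>x. \<psi> (a - x)) has_laurent_expansion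
        (fls_X_intpow (- d) * fps_to_fls (\<rho> oo YY))" unfolding YY_def by blast
  have e: "fls_X_intpow d * (fls_X_intpow (- d) * fps_to_fls (\<rho> oo YY)) = fps_to_fls (\<rho> oo YY)"
    by (simp only: mult.assoc[symmetric] fls_X_intpow_times_fls_X_intpow) simp
  show "symplectic_at \<psi> a d"
    unfolding symplectic_at_def
    by (intro exI[of _ "fls_X_intpow (- d) * fps_to_fls (\<rho> oo YY)"])
       (simp only: r e fls_subdegree_fls_to_fps_gt0 compose_sympl fls_regpart_fps_trivial simp_thms)
qed

lemma part3:
  assumes "symplectic_at \<psi>1 a d1" "symplectic_at \<psi>2 a d2"
  shows "symplectic_at (\<lambda>t. \<psi>1 t * \<psi>2 t) a (d1 + d2)"
proof -
  obtain F1 where F1: "(\<lambda>x. \<psi>1 (a - x)) has_laurent_expansion F1"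
     "fls_subdegree (fls_X_intpow d1 * F1) \<ge> 0" "symplectic_fps (fls_regpart (fls_X_intpow d1 * F1))"
    using assms(1) unfolding symplectic_at_def by blast
  obtain F2 where F2: "(\<lambda>x. \<psi>2 (a - x)) has_laurent_expansion F2"
     "fls_subdegree (fls_X_intpow d2 * F2) \<ge> 0" "symplectic_fps (fls_regpart (fls_X_intpow d2 * F2))"
    using assms(2) unfolding symplectic_at_def by blast
  define G1 where "G1 = fls_X_intpow d1 * F1"
  define G2 where "G2 = fls_X_intpow d2 * F2"
  have g1: "G1 = fps_to_fls (fls_regpart G1)" using F1(2) G1_def by simp
  have g2: "G2 = fps_to_fls (fls_regpart G2)" using F2(2) G2_def by simp
  have eq: "fls_X_intpow (d1 + d2) * (F1 * F2) = G1 * G2"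
  proof -
    have "fls_X_intpow (d1 + d2) = (fls_X_intpow d1 * fls_X_intpow d2 :: complex fls)"
      by (rule fls_X_intpow_times_fls_X_intpow[symmetric])
    then show ?thesis unfolding G1_def G2_def by (simp only: ac_simps)
  qed
  have eq2: "G1 * G2 = fps_to_fls (fls_regpart G1 * fls_regpart G2)"
    by (subst g1, subst g2) (simp add: fls_times_fps_to_fls)
  have exp: "(\<lambda>x. \<psi>1 (a - x) * \<psi>2 (a - x)) has_laurent_expansion F1 * F2"
    by (intro has_laurent_expansion_mult F1(1) F2(1))
  show ?thesis
    unfolding symplectic_at_def
    apply (rule exI[of _ "F1 * F2"])
    using exp F1(3) F2(3) unfolding eq eq2 G1_def[symmetric] G2_def[symmetric]
    by (simp add: fls_subdegree_fls_to_fps_gt0 sympl_mult)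
qed

theorem corollary1p5:
  shows "(symplectic_fps 0 \<and> symplectic_fps 1 \<and>
          (\<forall>f g (c::complex). symplectic_fps f \<and> symplectic_fps g \<longrightarrow>
             symplectic_fps (f + g) \<and> symplectic_fps (f * g) \<and>
             symplectic_fps (fps_const c * f)))
       \<and> (\<forall>(\<psi>::complex \<Rightarrow> complex) a d. \<psi> meromorphic_on {a} \<longrightarrow>
            (symplectic_at \<psi> a d \<longleftrightarrow>
              (\<exists>\<rho>::complex fps. (\<lambda>x. \<psi> (a - x)) has_laurent_expansion
                 (fls_X_intpow (- d) *
                  fps_to_fls (\<rho> oo (fps_X ^ 2 / (1 - fps_X)))))))
       \<and> (\<forall>(\<psi>1::complex \<Rightarrow> complex) \<psi>2 a d1 d2.
            symplectic_at \<psi>1 a d1 \<and> symplectic_at \<psi>2 a d2 \<longrightarrow>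
            symplectic_at (\<lambda>t. \<psi>1 t * \<psi>2 t) a (d1 + d2))"
proof (intro conjI allI impI)
  show "symplectic_fps 0" by (rule sympl_zero)
  show "symplectic_fps 1" by (rule sympl_one)
next
  fix f g :: "complex fps" and c :: complex
  assume fg: "symplectic_fps f \<and> symplectic_fps g"
  then show "symplectic_fps (f + g)" by (blast intro: sympl_add)
  show "symplectic_fps (f * g)" using fg by (blast intro: sympl_mult)
  show "symplectic_fps (fps_const c * f)" using fg by (blast intro: sympl_cmult)
next
  fix \<psi> :: "complex \<Rightarrow> complex" and a d
  show "symplectic_at \<psi> a d \<longleftrightarrow>
              (\<exists>\<rho>::complex fps. (\<lambda>x. \<psi> (a - x)) has_laurent_expansion
                 (fls_X_intpow (- d) *
                  fps_to_fls (\<rho> oo (fps_X ^ 2 / (1 - fps_X)))))" by (rule part2)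
next
  fix \<psi>1 \<psi>2 :: "complex \<Rightarrow> complex" and a d1 d2
  assume "symplectic_at \<psi>1 a d1 \<and> symplectic_at \<psi>2 a d2"
  then show "symplectic_at (\<lambda>t. \<psi>1 t * \<psi>2 t) a (d1 + d2)" using part3 by blast
qed

end
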